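(* Let $\Gamma$ be an extended Dynkin graph with standard integral Cartan matrix and $v\in\mathbb{R}^I$ a configuration. Suppose there are two ways, beginning with $v$, of successively firing vertices of amplitude $<-1$ until no vertex of amplitude $<-1$ is left. Then these two firing sequences have the same length and terminate at the same configuration.
   Context: $\Gamma$ is an extended Dynkin graph with vertex set $I$ and standard integral generalized Cartan matrix $C=(c_{ij})$. Firing vertex $i$ replaces $v\in\mathbb{R}^I$ by $f_i(v)$, where $f_i(v)_i=-v_i$, $f_i(v)_j=v_j-c_{ij}v_i$ if $j$ is adjacent to $i$, and $f_i(v)_j=v_j$ otherwise; "firing a vertex of amplitude $<-1$" means firing $i$ when $v_i<-1$. *)

theory Defs
  imports Complex_Main
begin

text \<open>Vertex set I = UNIV of a finite type 'i; C is the (integral) Cartan matrix.\<close>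

definition gcm :: "('i::finite \<Rightarrow> 'i \<Rightarrow> int) \<Rightarrow> bool" where
  "gcm C \<longleftrightarrow> (\<forall>i. C i i = 2) \<and> (\<forall>i j. i \<noteq> j \<longrightarrow> C i j \<le> 0)
              \<and> (\<forall>i j. C i j = 0 \<longleftrightarrow> C j i = 0)"

definition adjacent :: "('i \<Rightarrow> 'i \<Rightarrow> int) \<Rightarrow> 'i \<Rightarrow> 'i \<Rightarrow> bool" where
  "adjacent C i j \<longleftrightarrow> i \<noteq> j \<and> C i j \<noteq> 0"

definition indecomposable :: "('i::finite \<Rightarrow> 'i \<Rightarrow> int) \<Rightarrow> bool" where
  "indecomposable C \<longleftrightarrow> (\<forall>i j. (i, j) \<in> {(a, b). adjacent C a b}\<^sup>*)"

text \<open>Affine type (Kac, Thm. 4.3): indecomposable GCM admitting a vector with all entries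
  positive in its kernel. These are exactly the Cartan matrices of extended Dynkin graphs.\<close>
definition extended_dynkin :: "('i::finite \<Rightarrow> 'i \<Rightarrow> int) \<Rightarrow> bool" where
  "extended_dynkin C \<longleftrightarrow> gcm C \<and> indecomposable C \<and>
     (\<exists>\<delta>::'i \<Rightarrow> real. (\<forall>i. \<delta> i > 0) \<and> (\<forall>i. (\<Sum>j\<in>UNIV. of_int (C i j) * \<delta> j) = 0))"

definition fire :: "('i \<Rightarrow> 'i \<Rightarrow> int) \<Rightarrow> 'i \<Rightarrow> ('i \<Rightarrow> real) \<Rightarrow> ('i \<Rightarrow> real)" where
  "fire C i v = (\<lambda>j. if j = i then - v i
                     else if adjacent C i j then v j - of_int (C i j) * v i
                     else v j)"

fun play :: "('i \<Rightarrow> 'i \<Rightarrow> int) \<Rightarrow> ('i \<Rightarrow> real) \<Rightarrow> 'i list \<Rightarrow> ('i \<Rightarrow> real)" where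
  "play C v [] = v"
| "play C v (i # xs) = play C (fire C i v) xs"

fun legal :: "('i \<Rightarrow> 'i \<Rightarrow> int) \<Rightarrow> ('i \<Rightarrow> real) \<Rightarrow> 'i list \<Rightarrow> bool" where
  "legal C v [] = True"
| "legal C v (i # xs) = (v i < -1 \<and> legal C (fire C i v) xs)"

definition terminal :: "('i \<Rightarrow> real) \<Rightarrow> bool" where
  "terminal v \<longleftrightarrow> (\<forall>i. \<not> v i < -1)"

end

theory Submission
  imports Defs
begin

lemma fire_lin: "C i i = 2 \<Longrightarrow> fire C i v = (\<lambda>k. v k - of_int (C i k) * v i)"
  by (auto simp: fire_def adjacent_def fun_eq_iff)

fun alt :: "'i \<Rightarrow> 'i \<Rightarrow> nat \<Rightarrow> 'i list" where
  "alt i j 0 = []" | "alt i j (Suc n) = i # alt j i n"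

lemma length_alt: "length (alt i j n) = n"
  by (induction n arbitrary: i j) auto

lemma legal_append: "legal C v (xs @ ys) = (legal C v xs \<and> legal C (play C v xs) ys)"
  by (induction xs arbitrary: v) auto

lemma play_append: "play C v (xs @ ys) = play C (play C v xs) ys"
  by (induction xs arbitrary: v) auto

lemma gcm_diag: "gcm C \<Longrightarrow> C i i = 2" by (simp add: gcm_def)
lemma gcm_off: "gcm C \<Longrightarrow> i \<noteq> j \<Longrightarrow> C i j \<le> 0" by (simp add: gcm_def)
lemma gcm_sym0: "gcm C \<Longrightarrow> C i j = 0 \<longleftrightarrow> C j i = 0" by (simp add: gcm_def)

lemma div_step:
  fixes r s t a b :: real
  assumes "r > 0" "s > 0" "t \<ge> 2" "t * t = r * s" "a < -1" "r * a + t * b \<le> 0" "b < -1 \<or> b > 1"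
  shows "b + r * a < -1" "s * (b + r * a) + t * (- a) \<le> 0"
proof -
  show "b + r * a < -1"
  proof (cases "b < -1")
    case True
    have "r * a < 0" using assms by (simp add: mult_pos_neg)
    then show ?thesis using True by linarith
  next
    case False
    then have b: "b > 1" using assms by auto
    have "2 * b \<le> t * b" using b assms by (intro mult_right_mono) auto
    then show ?thesis using assms b by linarith
  qed
  have "s * (t * b) \<le> s * (- r * a)" using assms by (intro mult_left_mono) auto
  then have "t * (s * b) \<le> - (t * t) * a" using assms by (simp add: algebra_simps)
  then have "t * (s * b) \<le> t * (- t * a)" by (simp add: algebra_simps)
  then have sb: "s * b \<le> - t * a" using assms mult_le_cancel_left_pos[of t "s*b" "-t*a"] by simp
  have sb': "s * b \<le> -(t * a)" using sb by simp
  have e1: "t * (t - 2) * a \<le> 0" using assms by (intro mult_nonneg_nonpos) auto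
  have e2: "t*(t-2)*a = t*t*a - 2*(t*a)" by (simp add: algebra_simps)
  have e3: "r*s*a = t*t*a" using assms(4) by simp
  have e4: "s * (b + r * a) + t * (- a) = s*b + r*s*a - t*a" by (simp add: algebra_simps)
  show "s * (b + r * a) + t * (- a) \<le> 0"
    using sb' e1 e2 e3 e4 by linarith
qed

lemma diverge:
  assumes "gcm C" "i \<noteq> j" "C i j < 0" "C j i < 0" "t \<ge> 2"
    "t * t = of_int (C i j * C j i)"
    "v i < -1" "- of_int (C i j) * v i + t * v j \<le> 0" "v j < -1 \<or> v j > 1"
  shows "legal C v (alt i j n)"
  using assms
proof (induction n arbitrary: i j v)
  case 0
  then show ?case by simp
next
  case (Suc n)
  let ?r = "- real_of_int (C i j)" and ?s = "- real_of_int (C j i)"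
  have st: "b + ?r * a < -1" "?s * (b + ?r * a) + t * (- a) \<le> 0"
    if "a < -1" "?r * a + t * b \<le> 0" "b < -1 \<or> b > 1" for a b
    using div_step[of ?r ?s t a b] Suc.prems that by (auto simp: algebra_simps)
  have ii: "C i i = 2" using Suc.prems gcm_diag by blast
  have f1: "fire C i v j = v j + ?r * v i" "fire C i v i = - v i"
    using ii Suc.prems by (auto simp: fire_lin)
  have "legal C (fire C i v) (alt j i n)"
  proof (rule Suc.IH)
    show "fire C i v j < -1" unfolding f1 by (rule st(1)[OF Suc.prems(7-9)])
    show "- of_int (C j i) * fire C i v j + t * fire C i v i \<le> 0"
      unfolding f1 by (rule st(2)[OF Suc.prems(7-9)])
    show "fire C i v i < -1 \<or> fire C i v i > 1" using f1 Suc.prems by simp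
    show "t * t = of_int (C j i * C i j)" using Suc.prems by (simp add: mult.commute)
  qed (use Suc.prems in auto)
  then show ?case using Suc.prems by simp
qed

lemma poly0: assumes "C i i = 2" "C j j = 2" "C i j = 0" "C j i = 0" "v i < -1" "v j < -1"
  shows "legal C v (alt i j 2) \<and> legal C v (alt j i 2) \<and> play C v (alt i j 2) = play C v (alt j i 2)"
  using assms by (simp add: numeral_eq_Suc fire_lin fun_eq_iff algebra_simps)

lemma poly1: assumes "C i i = 2" "C j j = 2" "C i j = -1" "C j i = -1" "v i < -1" "v j < -1"
  shows "legal C v (alt i j 3) \<and> legal C v (alt j i 3) \<and> play C v (alt i j 3) = play C v (alt j i 3)"
  using assms by (simp add: numeral_eq_Suc fire_lin fun_eq_iff algebra_simps)

lemma poly2: assumes "C i i = 2" "C j j = 2" "C i j = -1" "C j i = -2" "v i < -1" "v j < -1"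
  shows "legal C v (alt i j 4) \<and> legal C v (alt j i 4) \<and> play C v (alt i j 4) = play C v (alt j i 4)"
  using assms by (simp add: numeral_eq_Suc fire_lin fun_eq_iff algebra_simps)

lemma poly3: assumes "C i i = 2" "C j j = 2" "C i j = -1" "C j i = -3" "v i < -1" "v j < -1"
  shows "legal C v (alt i j 6) \<and> legal C v (alt j i 6) \<and> play C v (alt i j 6) = play C v (alt j i 6)"
  using assms by (simp add: numeral_eq_Suc fire_lin fun_eq_iff algebra_simps)

lemma polygon:
  assumes "gcm C" "i \<noteq> j" "v i < -1" "v j < -1" "C i j * C j i \<le> 3"
  shows "\<exists>m\<ge>1. legal C v (alt i j m) \<and> legal C v (alt j i m) \<and> play C v (alt i j m) = play C v (alt j i m)"
proof -
  have ii: "C i i = 2" "C j j = 2" using assms gcm_diag by blast+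
  have le: "C i j \<le> 0" "C j i \<le> 0" using assms gcm_off by metis+
  have z: "C i j = 0 \<longleftrightarrow> C j i = 0" using assms gcm_sym0 by blast
  have cases: "(C i j = 0 \<and> C j i = 0) \<or> (C i j = -1 \<and> C j i = -1) \<or> (C i j = -1 \<and> C j i = -2)
     \<or> (C i j = -2 \<and> C j i = -1) \<or> (C i j = -1 \<and> C j i = -3) \<or> (C i j = -3 \<and> C j i = -1)"
  proof (cases "C i j = 0")
    case True then show ?thesis using z by auto
  next
    case False
    then have a: "- C i j \<ge> 1" "- C j i \<ge> 1" using le z by auto
    have p: "C i j * C j i = (- C i j) * (- C j i)" by simp
    have "(- C i j) * 1 \<le> (- C i j) * (- C j i)" using a by (intro mult_left_mono) auto
    then have b1: "- C i j \<le> 3" using assms(5) p by linarith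
    have "1 * (- C j i) \<le> (- C i j) * (- C j i)" using a by (intro mult_right_mono) auto
    then have b2: "- C j i \<le> 3" using assms(5) p by linarith
    have "C i j \<in> {-3,-2,-1}" "C j i \<in> {-3,-2,-1}" using a b1 b2 by auto
    then show ?thesis using assms(5) by auto
  qed
  then show ?thesis
  proof (elim disjE conjE)
    assume "C i j = 0" "C j i = 0"
    then show ?thesis using poly0[of C i j v] ii assms by (intro exI[of _ 2]) auto
  next
    assume "C i j = -1" "C j i = -1"
    then show ?thesis using poly1[of C i j v] ii assms by (intro exI[of _ 3]) auto
  next
    assume "C i j = -1" "C j i = -2"
    then show ?thesis using poly2[of C i j v] ii assms by (intro exI[of _ 4]) auto
  next
    assume "C i j = -2" "C j i = -1"
    then show ?thesis using poly2[of C j i v] ii assms by (intro exI[of _ 4]) auto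
  next
    assume "C i j = -1" "C j i = -3"
    then show ?thesis using poly3[of C i j v] ii assms by (intro exI[of _ 6]) auto
  next
    assume "C i j = -3" "C j i = -1"
    then show ?thesis using poly3[of C j i v] ii assms by (intro exI[of _ 6]) auto
  qed
qed


lemma exists_terminal:
  "(\<forall>ys. legal C w ys \<longrightarrow> length ys \<le> N) \<Longrightarrow> \<exists>zs. legal C w zs \<and> terminal (play C w zs)"
proof (induction N arbitrary: w)
  case 0
  have "terminal w"
  proof (rule ccontr)
    assume "\<not> terminal w"
    then obtain k where "w k < -1" by (auto simp: terminal_def)
    then have "legal C w [k]" by simp
    moreover have "legal C w [k] \<longrightarrow> length [k] \<le> 0" using "0.prems" by (rule spec)
    ultimately have "length [k] \<le> 0" by (rule rev_mp)
    then show False by simp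
  qed
  then show ?case by (intro exI[of _ "[]"]) simp
next
  case (Suc N)
  show ?case
  proof (cases "terminal w")
    case True
    then show ?thesis by (intro exI[of _ "[]"]) simp
  next
    case False
    then obtain k where k: "w k < -1" by (auto simp: terminal_def)
    have "\<forall>ys. legal C (fire C k w) ys \<longrightarrow> length ys \<le> N"
    proof (intro allI impI)
      fix ys assume "legal C (fire C k w) ys"
      then have "legal C w (k # ys)" using k by simp
      moreover have "legal C w (k # ys) \<longrightarrow> length (k # ys) \<le> Suc N" using Suc.prems by (rule spec)
      ultimately have "length (k # ys) \<le> Suc N" by (rule rev_mp)
      then show "length ys \<le> N" by simp
    qed
    from Suc.IH[OF this] obtain zs where "legal C (fire C k w) zs" "terminal (play C (fire C k w) zs)"
      by blast
    then show ?thesis using k by (intro exI[of _ "k # zs"]) simp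
  qed
qed

lemma main:
  assumes g: "gcm C"
  shows "legal C v xs \<Longrightarrow> terminal (play C v xs) \<Longrightarrow> legal C v ys \<Longrightarrow>
    length ys \<le> length xs \<and> (terminal (play C v ys) \<longrightarrow> length ys = length xs \<and> play C v ys = play C v xs)"
proof (induction "length xs" arbitrary: v xs ys rule: less_induct)
  case less
  show ?case
  proof (cases xs)
    case Nil
    then have tv: "terminal v" using less.prems by simp
    have "ys = []"
    proof (cases ys)
      case (Cons j ys')
      then show ?thesis using less.prems(3) tv by (simp add: terminal_def)
    qed simp
    then show ?thesis using Nil by simp
  next
    case (Cons i xs')
    have vi: "v i < -1" and lx': "legal C (fire C i v) xs'" and tx': "terminal (play C (fire C i v) xs')"
      using less.prems Cons by auto
    have IH1: "length zs \<le> length xs' \<and> (terminal (play C (fire C i v) zs) \<longrightarrow>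
        length zs = length xs' \<and> play C (fire C i v) zs = play C (fire C i v) xs')"
      if "legal C (fire C i v) zs" for zs
      using less.hyps[of xs' "fire C i v" zs] Cons lx' tx' that by simp
    show ?thesis
    proof (cases ys)
      case Nil
      then show ?thesis using vi by (auto simp: terminal_def)
    next
      case (Cons j ys')
      have vj: "v j < -1" and ly': "legal C (fire C j v) ys'" using less.prems(3) Cons by auto
      show ?thesis
      proof (cases "j = i")
        case True
        then show ?thesis using IH1[of ys'] ly' \<open>ys = j # ys'\<close> \<open>xs = i # xs'\<close> by simp
      next
        case False
        show ?thesis
        proof (cases "C i j * C j i \<ge> 4")
          case True
          have le: "C i j \<le> 0" "C j i \<le> 0" using g False gcm_off by metis+
          have z: "C i j = 0 \<longleftrightarrow> C j i = 0" using g gcm_sym0 by blast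
          have nz: "C i j \<noteq> 0" using True by (cases "C i j = 0") auto
          have neg: "C i j < 0" "C j i < 0" using nz le z by auto
          have ij: "i \<noteq> j" using False by auto
          define t where "t = sqrt (of_int (C i j * C j i))"
          have tt: "t * t = of_int (C i j * C j i)" unfolding t_def using True
            by (simp del: of_int_mult)
          have t2: "t \<ge> 2" unfolding t_def using True real_le_rsqrt[of 2 "of_int (C i j * C j i)"]
            by (simp del: of_int_mult)
          have "- of_int (C i j) * v i + t * v j \<le> 0"
          proof -
            have "0 \<le> of_int (C i j) * v i" using neg vi by (intro mult_nonpos_nonpos) auto
            then have "- of_int (C i j) * v i \<le> 0" by simp
            moreover have "t * v j \<le> 0" using t2 vj by (simp add: mult_nonneg_nonpos)
            ultimately show ?thesis by linarith
          qed
          then have "legal C v (alt i j (Suc (length xs)))"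
            by (rule diverge[of C i j t v, OF g ij neg t2 tt vi]) (use vj in simp)
          then have "legal C (fire C i v) (alt j i (length xs))" by simp
          from IH1[OF this] show ?thesis using \<open>xs = i # xs'\<close> by (simp add: length_alt)
        next
          case False2: False
          obtain m where m: "m \<ge> 1" "legal C v (alt i j m)" "legal C v (alt j i m)"
            "play C v (alt i j m) = play C v (alt j i m)"
            using polygon[of C i j v] g False False2 vi vj by force
          then obtain m' where m': "m = Suc m'" by (cases m) auto
          define w where "w = play C v (alt i j m)"
          have l1: "legal C (fire C i v) (alt j i m')" and p1: "play C (fire C i v) (alt j i m') = w"
            using m m' w_def by auto
          have l2: "legal C (fire C j v) (alt i j m')" and p2: "play C (fire C j v) (alt i j m') = w"
            using m m' w_def by auto
          have "\<forall>zs. legal C w zs \<longrightarrow> length zs \<le> length xs'"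
          proof (intro allI impI)
            fix zs assume "legal C w zs"
            then have "legal C (fire C i v) (alt j i m' @ zs)" using l1 p1 by (simp add: legal_append)
            from IH1[OF this] show "length zs \<le> length xs'" by simp
          qed
          then obtain zs where zs: "legal C w zs" "terminal (play C w zs)"
            using exists_terminal[of C w "length xs'"] by metis
          have "legal C (fire C i v) (alt j i m' @ zs)" using l1 p1 zs by (simp add: legal_append)
          from IH1[OF this] have e: "m' + length zs = length xs'" "play C w zs = play C (fire C i v) xs'"
            using zs p1 by (simp_all add: play_append length_alt)
          define us where "us = alt i j m' @ zs"
          have lu: "legal C (fire C j v) us" "terminal (play C (fire C j v) us)"
            "length us = length xs'" "play C (fire C j v) us = play C v xs"
            using l2 p2 zs e \<open>xs = i # xs'\<close> by (simp_all add: us_def legal_append play_append length_alt)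
          have "length us < length xs" using lu \<open>xs = i # xs'\<close> by simp
          from less.hyps[OF this lu(1) lu(2) ly'] lu \<open>ys = j # ys'\<close> \<open>xs = i # xs'\<close>
          show ?thesis by simp
        qed
      qed
    qed
  qed
qed

theorem corollary3p5:
  fixes C :: "'i::finite \<Rightarrow> 'i \<Rightarrow> int" and v :: "'i \<Rightarrow> real"
    and xs ys :: "'i list"
  assumes "extended_dynkin C"
    and "legal C v xs" and "terminal (play C v xs)"
    and "legal C v ys" and "terminal (play C v ys)"
  shows "length xs = length ys \<and> play C v xs = play C v ys"
proof -
  have "gcm C" using assms(1) by (simp add: extended_dynkin_def)
  from main[OF this assms(2,3,4)] assms(5) show ?thesis by simp
qed

end
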